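(* For all pure terms $t,t'$: $t\equiv t'$ if and only if $t=t'$ (syntactic equality up to $\alpha$-conversion).
   Context: Pure terms are those of the calculus with pure values $v::=x\mid\lambda x.\vec{s}\mid *\mid (v_1,v_2)\mid \mathtt{inl}(v)\mid\mathtt{inr}(v)$ and pure terms $s,t::=v\mid s\,t\mid t;\vec{s}\mid \mathtt{let}\,(x_1,x_2)=t\,\mathtt{in}\,\vec{s}\mid \mathtt{match}\,t\,\{\mathtt{inl}\,x_1\mapsto\vec{s}_1\mid\mathtt{inr}\,x_2\mapsto\vec{s}_2\}$, considered up to $\alpha$-conversion. Term distributions are formal expressions $\vec{t}::=\vec{0}\mid t\mid \vec{s}+\vec{t}\mid\alpha\cdot\vec{t}$ ($\alpha\in\mathbb{C}$). $\equiv$ is the congruence on term distributions (going only through $+$ and $\cdot$, never inside pure terms) generated by: $\vec t+\vec0\equiv\vec t$; $1\cdot\vec t\equiv\vec t$; $\alpha\cdot(\beta\cdot\vec t)\equiv\alpha\beta\cdot\vec t$; commutativity and associativity of $+$; $(\alpha+\beta)\cdot\vec t\equiv\alpha\cdot\vec t+\beta\cdot\vec t$; $\alpha\cdot(\vec t_1+\vec t_2)\equiv\alpha\cdot\vec t_1+\alpha\cdot\vec t_2$. *)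

theory Defs
  imports Complex_Main
begin

text \<open>Pure values, pure terms and term distributions, with bound variables
represented by de Bruijn indices, so that HOL equality on these datatypes is
syntactic equality up to alpha-conversion.
 - PLam d : lambda x. d (binds one variable, index 0 in d)
 - PLet t d : let (x1,x2) = t in d (binds two variables in d: x1 is index 1, x2 is index 0)
 - PMatch t d1 d2 : match t {inl x1 -> d1 | inr x2 -> d2} (each branch binds one variable)\<close>

datatype pval =
    PVar nat
  | PLam dist
  | PStar
  | PPair pval pval
  | PInl pval
  | PInr pval
and pterm =
    PV pval
  | PApp pterm pterm
  | PSeq pterm dist
  | PLet pterm dist
  | PMatch pterm dist dist
and dist =
    DZero
  | DTerm pterm
  | DPlus dist dist
  | DScale complex dist

inductive dequiv :: "dist \<Rightarrow> dist \<Rightarrow> bool" (infix "\<equiv>\<^sub>d" 50) where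
  drefl: "s \<equiv>\<^sub>d s"
| dsym: "s \<equiv>\<^sub>d t \<Longrightarrow> t \<equiv>\<^sub>d s"
| dtrans: "s \<equiv>\<^sub>d t \<Longrightarrow> t \<equiv>\<^sub>d u \<Longrightarrow> s \<equiv>\<^sub>d u"
| dcong_plus: "s1 \<equiv>\<^sub>d t1 \<Longrightarrow> s2 \<equiv>\<^sub>d t2 \<Longrightarrow> DPlus s1 s2 \<equiv>\<^sub>d DPlus t1 t2"
| dcong_scale: "s \<equiv>\<^sub>d t \<Longrightarrow> DScale \<alpha> s \<equiv>\<^sub>d DScale \<alpha> t"
| dplus_zero: "DPlus t DZero \<equiv>\<^sub>d t"
| done_scale: "DScale 1 t \<equiv>\<^sub>d t"
| dscale_scale: "DScale \<alpha> (DScale \<beta> t) \<equiv>\<^sub>d DScale (\<alpha> * \<beta>) t"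
| dplus_comm: "DPlus s t \<equiv>\<^sub>d DPlus t s"
| dplus_assoc: "DPlus (DPlus s t) u \<equiv>\<^sub>d DPlus s (DPlus t u)"
| dscale_add: "DScale (\<alpha> + \<beta>) t \<equiv>\<^sub>d DPlus (DScale \<alpha> t) (DScale \<beta> t)"
| dscale_distrib: "DScale \<alpha> (DPlus t1 t2) \<equiv>\<^sub>d DPlus (DScale \<alpha> t1) (DScale \<alpha> t2)"

end

theory Submission
  imports Defs
begin

primrec ev :: "dist \<Rightarrow> pterm \<Rightarrow> complex" where
  "ev DZero = (\<lambda>x. 0)"
| "ev (DTerm t) = (\<lambda>x. if x = t then 1 else 0)"
| "ev (DPlus a b) = (\<lambda>x. ev a x + ev b x)"
| "ev (DScale c a) = (\<lambda>x. c * ev a x)"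

lemma ev_inv: "s \<equiv>\<^sub>d t \<Longrightarrow> ev s = ev t"
  by (induction rule: dequiv.induct) (auto simp: algebra_simps)

theorem corollary1:
  fixes t t' :: pterm
  shows "DTerm t \<equiv>\<^sub>d DTerm t' \<longleftrightarrow> t = t'"
proof
  assume "DTerm t \<equiv>\<^sub>d DTerm t'"
  then have "ev (DTerm t) t = ev (DTerm t') t" using ev_inv by metis
  then show "t = t'" by (auto split: if_splits)
next
  assume "t = t'" then show "DTerm t \<equiv>\<^sub>d DTerm t'" by (simp add: drefl)
qed

end
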